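(* Let $X$ be a Tychonoff space and $G$ a subgroup of $C_u(X)$ (with the subspace topology). Then $G$ is strictly R-bounded if and only if $G$ is countable.
   Context: $C(X)$ is the set of continuous real-valued functions on $X$, a topological group under pointwise addition; $C_u(X)$ is $C(X)$ with the topology of uniform convergence. For a topological group $G$ with identity $e$, the R-game is played as follows: in round $n\in\mathbb N$ player ONE chooses a neighborhood $U_n$ of $e$ and player TWO responds with a point $x_n\in G$; TWO wins if $G=\bigcup_n x_n\cdot U_n$. $G$ is strictly R-bounded if TWO has a winning strategy in this game. *)

theory Defs
  imports "HOL-Analysis.Analysis"
begin

definition tychonoff_space :: "'a topology \<Rightarrow> bool" where
  "tychonoff_space X \<longleftrightarrow> completely_regular_space X \<and> t1_space X"

text \<open>C(X): continuous real functions on X, normalised to 0 outside topspace X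
  (so that each function on X has exactly one representative).\<close>
definition cfun :: "'a topology \<Rightarrow> ('a \<Rightarrow> real) set" where
  "cfun X = {f. continuous_map X euclideanreal f \<and> (\<forall>x. x \<notin> topspace X \<longrightarrow> f x = 0)}"

definition cfun_subgroup :: "'a topology \<Rightarrow> ('a \<Rightarrow> real) set \<Rightarrow> bool" where
  "cfun_subgroup X G \<longleftrightarrow> G \<subseteq> cfun X \<and> (\<lambda>x. 0) \<in> G \<and>
     (\<forall>f\<in>G. \<forall>g\<in>G. (\<lambda>x. f x + g x) \<in> G) \<and> (\<forall>f\<in>G. (\<lambda>x. - f x) \<in> G)"

definition uball :: "'a topology \<Rightarrow> ('a \<Rightarrow> real) \<Rightarrow> real \<Rightarrow> ('a \<Rightarrow> real) set" where
  "uball X f e = {g. \<forall>x\<in>topspace X. \<bar>g x - f x\<bar> < e}"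

definition uopen_in :: "'a topology \<Rightarrow> ('a \<Rightarrow> real) set \<Rightarrow> ('a \<Rightarrow> real) set \<Rightarrow> bool" where
  "uopen_in X G V \<longleftrightarrow> V \<subseteq> G \<and> (\<forall>f\<in>V. \<exists>e>0. G \<inter> uball X f e \<subseteq> V)"

definition unbhd0 :: "'a topology \<Rightarrow> ('a \<Rightarrow> real) set \<Rightarrow> ('a \<Rightarrow> real) set \<Rightarrow> bool" where
  "unbhd0 X G U \<longleftrightarrow> U \<subseteq> G \<and> (\<exists>V. uopen_in X G V \<and> (\<lambda>x. 0) \<in> V \<and> V \<subseteq> U)"

text \<open>R-game on G: a strategy of TWO maps the list of ONE's moves so far
  [U_0,...,U_n] to TWO's point x_n.\<close>
definition strictly_R_bounded :: "'a topology \<Rightarrow> ('a \<Rightarrow> real) set \<Rightarrow> bool" where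
  "strictly_R_bounded X G \<longleftrightarrow>
     (\<exists>\<sigma> :: ('a \<Rightarrow> real) set list \<Rightarrow> ('a \<Rightarrow> real).
        \<forall>U :: nat \<Rightarrow> ('a \<Rightarrow> real) set. (\<forall>n. unbhd0 X G (U n)) \<longrightarrow>
          (\<forall>n. \<sigma> (map U [0..<Suc n]) \<in> G) \<and>
          G = (\<Union>n. (\<lambda>u x. \<sigma> (map U [0..<Suc n]) x + u x) ` U n))"

end

theory Submission
  imports Defs
begin

lemma small_zero:
  fixes d :: real
  assumes "d \<ge> 0" "\<And>k. d < 2 / real (Suc k)"
  shows "d = 0"
proof (rule ccontr)
  assume "d \<noteq> 0"
  then have "d/2 > 0" using assms(1) by simp
  then obtain n where n: "inverse (real (Suc n)) < d/2" using reals_Archimedean by blast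
  have "d < 2 / real (Suc n)" using assms(2) by blast
  with n show False by (simp add: field_simps)
qed

lemma half_gap: "(b::real) < a \<Longrightarrow> b + (a - b) / 2 < a" by (simp add: field_simps)

lemma countable_to_R:
  assumes G: "cfun_subgroup X G" and c: "countable G"
  shows "strictly_R_bounded X G"
proof -
  have z: "(\<lambda>x. 0) \<in> G" using G unfolding cfun_subgroup_def by blast
  define g where "g = from_nat_into G"
  have ne: "G \<noteq> {}" using z by blast
  have rg: "range g = G" unfolding g_def by (rule range_from_nat_into[OF ne c])
  define \<sigma> where "\<sigma> = (\<lambda>l::('a \<Rightarrow> real) set list. g (length l - 1))"
  show ?thesis unfolding strictly_R_bounded_def
  proof (rule exI[of _ \<sigma>], intro allI impI, rule conjI)
    fix U :: "nat \<Rightarrow> ('a \<Rightarrow> real) set"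
    assume U: "\<forall>n. unbhd0 X G (U n)"
    have s: "\<And>n. \<sigma> (map U [0..<Suc n]) = g n" unfolding \<sigma>_def by simp
    show "\<forall>n. \<sigma> (map U [0..<Suc n]) \<in> G" using s rg by auto
    show "G = (\<Union>n. (\<lambda>u x. \<sigma> (map U [0..<Suc n]) x + u x) ` U n)"
    proof
      show "G \<subseteq> (\<Union>n. (\<lambda>u x. \<sigma> (map U [0..<Suc n]) x + u x) ` U n)"
      proof
        fix h assume "h \<in> G"
        then obtain m where m: "h = g m" using rg by blast
        have "unbhd0 X G (U m)" using U by blast
        then have z0: "(\<lambda>x. 0) \<in> U m" unfolding unbhd0_def by blast
        have "(\<lambda>x. \<sigma> (map U [0..<Suc m]) x + 0) \<in> (\<lambda>u x. \<sigma> (map U [0..<Suc m]) x + u x) ` U m"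
          by (rule image_eqI[OF _ z0]) simp
        then have "h \<in> (\<lambda>u x. \<sigma> (map U [0..<Suc m]) x + u x) ` U m"
          using m s[of m] by simp
        then show "h \<in> (\<Union>n. (\<lambda>u x. \<sigma> (map U [0..<Suc n]) x + u x) ` U n)"
          by (rule UN_I[rotated]) simp
      qed
    next
      show "(\<Union>n. (\<lambda>u x. \<sigma> (map U [0..<Suc n]) x + u x) ` U n) \<subseteq> G"
      proof clarify
        fix n u assume u: "u \<in> U n"
        have "unbhd0 X G (U n)" using U by blast
        then have "U n \<subseteq> G" unfolding unbhd0_def by blast
        then have "u \<in> G" using u by blast
        moreover have "g n \<in> G" using rg by blast
        ultimately have "(\<lambda>x. g n x + u x) \<in> G"
          using G unfolding cfun_subgroup_def by blast
        then show "(\<lambda>x. \<sigma> (map U [0..<Suc n]) x + u x) \<in> G"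
          using s[of n] by simp
      qed
    qed
  qed
qed

lemma R_to_countable:
  assumes G: "cfun_subgroup X G" and R: "strictly_R_bounded X G"
  shows "countable G"
proof -
  obtain \<sigma> :: "('a \<Rightarrow> real) set list \<Rightarrow> ('a \<Rightarrow> real)" where
    \<sigma>: "\<And>U. (\<forall>n. unbhd0 X G (U n)) \<Longrightarrow>
          (\<forall>n. \<sigma> (map U [0..<Suc n]) \<in> G) \<and>
          G = (\<Union>n. (\<lambda>u x. \<sigma> (map U [0..<Suc n]) x + u x) ` U n)"
    using R unfolding strictly_R_bounded_def by blast
  define W where "W = (\<lambda>k::nat. {g\<in>G. \<exists>d<1 / real (Suc k). \<forall>x\<in>topspace X. \<bar>g x\<bar> \<le> d})"
  have Wn: "unbhd0 X G (W k)" for k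
  proof -
    have "uopen_in X G (W k)" unfolding uopen_in_def
    proof (intro conjI ballI)
      show "W k \<subseteq> G" unfolding W_def by blast
    next
      fix f assume "f \<in> W k"
      then obtain d where d: "d < 1 / real (Suc k)" "\<forall>x\<in>topspace X. \<bar>f x\<bar> \<le> d"
        unfolding W_def by blast
      define e where "e = (1 / real (Suc k) - d) / 2"
      have e: "e > 0" using d unfolding e_def by simp
      have "G \<inter> uball X f e \<subseteq> W k"
      proof
        fix h assume h: "h \<in> G \<inter> uball X f e"
        have "\<forall>x\<in>topspace X. \<bar>h x\<bar> \<le> d + e"
        proof
          fix x assume x: "x \<in> topspace X"
          have "\<bar>h x - f x\<bar> < e" using h x unfolding uball_def by blast
          then show "\<bar>h x\<bar> \<le> d + e" using d(2) x by force
        qed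
        moreover have "d + e < 1 / real (Suc k)" using d(1) unfolding e_def
          using half_gap[of d "1 / real (Suc k)"] by blast
        ultimately show "h \<in> W k" using h unfolding W_def by blast
      qed
      then show "\<exists>e>0. G \<inter> uball X f e \<subseteq> W k" using e by blast
    qed
    moreover have "(\<lambda>x. 0) \<in> W k" using G unfolding W_def cfun_subgroup_def by force
    moreover have "W k \<subseteq> G" unfolding W_def by blast
    ultimately show ?thesis unfolding unbhd0_def by blast
  qed
  define \<tau> where "\<tau> = (\<lambda>s. \<sigma> (map W s))"
  define P where "P = (\<lambda>f s. \<forall>k. \<forall>x\<in>topspace X. \<bar>f x - \<tau> (s @ [k]) x\<bar> < 1 / real (Suc k))"
  have ex: "\<exists>s. P f s" if f: "f \<in> G" for f
  proof (rule ccontr)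
    assume "\<nexists>s. P f s"
    then have "\<forall>s. \<exists>k. \<not> (\<forall>x\<in>topspace X. \<bar>f x - \<tau> (s @ [k]) x\<bar> < 1 / real (Suc k))"
      unfolding P_def by blast
    then obtain c where c: "\<And>s. \<not> (\<forall>x\<in>topspace X. \<bar>f x - \<tau> (s @ [c s]) x\<bar> < 1 / real (Suc (c s)))"
      by metis
    define seq where "seq = rec_nat [] (\<lambda>n l. l @ [c l])"
    have seq0: "seq 0 = []" and seqS: "\<And>n. seq (Suc n) = seq n @ [c (seq n)]"
      unfolding seq_def by simp_all
    have seqm: "seq n = map (\<lambda>i. c (seq i)) [0..<n]" for n
      by (induction n) (simp_all add: seq0 seqS)
    define U where "U = (\<lambda>n. W (c (seq n)))"
    have mU: "map U [0..<Suc n] = map W (seq n @ [c (seq n)])" for n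
    proof -
      have "map U [0..<Suc n] = map W (seq (Suc n))"
        unfolding seqm[of "Suc n"] U_def map_map comp_def ..
      then show ?thesis by (simp only: seqS)
    qed
    have "\<forall>n. unbhd0 X G (U n)" using Wn unfolding U_def by blast
    from \<sigma>[OF this] f obtain n u where u: "u \<in> U n"
      and fe: "f = (\<lambda>x. \<sigma> (map U [0..<Suc n]) x + u x)" by blast
    have "\<forall>x\<in>topspace X. \<bar>f x - \<tau> (seq n @ [c (seq n)]) x\<bar> < 1 / real (Suc (c (seq n)))"
    proof
      fix x assume x: "x \<in> topspace X"
      obtain d where "d < 1 / real (Suc (c (seq n)))" "\<forall>x\<in>topspace X. \<bar>u x\<bar> \<le> d"
        using u unfolding U_def W_def by blast
      then have "\<bar>u x\<bar> < 1 / real (Suc (c (seq n)))" using x by force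
      moreover have "f x - \<tau> (seq n @ [c (seq n)]) x = u x"
        using fe mU[of n] unfolding \<tau>_def by simp
      ultimately show "\<bar>f x - \<tau> (seq n @ [c (seq n)]) x\<bar> < 1 / real (Suc (c (seq n)))" by simp
    qed
    with c show False by blast
  qed
  define S where "S = (\<lambda>f. SOME s. P f s)"
  have SP: "P f (S f)" if "f \<in> G" for f unfolding S_def using ex[OF that] by (rule someI_ex)
  have "inj_on S G"
  proof (rule inj_onI)
    fix f g assume f: "f \<in> G" and g: "g \<in> G" and eq: "S f = S g"
    show "f = g"
    proof
      fix x
      show "f x = g x"
      proof (cases "x \<in> topspace X")
        case True
        have "\<bar>f x - g x\<bar> = 0"
        proof (rule small_zero)
          fix k
          have "\<bar>f x - \<tau> (S f @ [k]) x\<bar> < 1 / real (Suc k)" using SP[OF f] True unfolding P_def by blast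
          moreover have "\<bar>g x - \<tau> (S f @ [k]) x\<bar> < 1 / real (Suc k)" using SP[OF g] True eq unfolding P_def by metis
          ultimately show "\<bar>f x - g x\<bar> < 2 / real (Suc k)" by linarith
        qed simp
        then show ?thesis by simp
      next
        case False
        have "f \<in> cfun X" "g \<in> cfun X" using G f g unfolding cfun_subgroup_def by blast+
        then show ?thesis using False unfolding cfun_def by simp
      qed
    qed
  qed
  moreover have "countable (S ` G)" by (rule countable_subset[of _ UNIV]) auto
  ultimately show ?thesis using countable_image_inj_on by blast
qed

theorem theorem2p10:
  fixes X :: "'a topology" and G :: "('a \<Rightarrow> real) set"
  assumes "tychonoff_space X" and "cfun_subgroup X G"
  shows "strictly_R_bounded X G \<longleftrightarrow> countable G"
  using assms(2) R_to_countable countable_to_R by blast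

end
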